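(* If $n=p^s$ with $p$ prime and $s\ge 1$ an integer, then the $n\times n$ square has no perfect Mondrian partition.
   Context: A Mondrian partition of an $n\times n$ square ($n$ a positive integer) is a dissection of the square into $k\ge 2$ non-overlapping rectangles with positive integer side lengths which are pairwise non-congruent (rectangles of dimensions $a\times b$ and $b\times a$ count as congruent). It is perfect if all its rectangles have the same area. *)

theory Defs
  imports Main "HOL-Computational_Algebra.Primes"
begin

text \<open>An axis-parallel rectangle with integer corners inside the n x n square,
  given as (x, y, w, h): lower-left corner (x,y), width w, height h.
  Since all corners are integers, a rectangle is determined by the set of unit
  cells it covers; cell (i,j) stands for the unit square [i,i+1] x [j,j+1].\<close>

type_synonym rect = "nat \<times> nat \<times> nat \<times> nat"

fun rwidth :: "rect \<Rightarrow> nat" where "rwidth (x, y, w, h) = w"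
fun rheight :: "rect \<Rightarrow> nat" where "rheight (x, y, w, h) = h"

fun cells :: "rect \<Rightarrow> (nat \<times> nat) set" where
  "cells (x, y, w, h) = {x..<x+w} \<times> {y..<y+h}"

fun rarea :: "rect \<Rightarrow> nat" where "rarea (x, y, w, h) = w * h"

definition congruent_rect :: "rect \<Rightarrow> rect \<Rightarrow> bool" where
  "congruent_rect r s \<longleftrightarrow>
     (rwidth r = rwidth s \<and> rheight r = rheight s) \<or>
     (rwidth r = rheight s \<and> rheight r = rwidth s)"

text \<open>A dissection of the n x n square into the rectangles of the list rs:
  positive integer sides, non-overlapping (disjoint interiors, i.e. disjoint
  cell sets), and covering the whole square.\<close>
definition dissection :: "nat \<Rightarrow> rect list \<Rightarrow> bool" where
  "dissection n rs \<longleftrightarrow>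
     (\<forall>r\<in>set rs. rwidth r > 0 \<and> rheight r > 0) \<and>
     (\<forall>i<length rs. \<forall>j<length rs. i \<noteq> j \<longrightarrow> cells (rs!i) \<inter> cells (rs!j) = {}) \<and>
     (\<Union>r\<in>set rs. cells r) = {0..<n} \<times> {0..<n}"

definition mondrian_partition :: "nat \<Rightarrow> rect list \<Rightarrow> bool" where
  "mondrian_partition n rs \<longleftrightarrow>
     length rs \<ge> 2 \<and> dissection n rs \<and>
     (\<forall>i<length rs. \<forall>j<length rs. i \<noteq> j \<longrightarrow> \<not> congruent_rect (rs!i) (rs!j))"

definition perfect_mondrian_partition :: "nat \<Rightarrow> rect list \<Rightarrow> bool" where
  "perfect_mondrian_partition n rs \<longleftrightarrow>
     mondrian_partition n rs \<and> (\<forall>r\<in>set rs. \<forall>s\<in>set rs. rarea r = rarea s)"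

end

theory Submission
  imports Defs
begin

lemma card_cells: "card (cells r) = rarea r"
  by (cases r) (simp add: card_cartesian_product)

lemma cong_refl: "congruent_rect r r"
  by (simp add: congruent_rect_def)

lemma mp_distinct:
  assumes "mondrian_partition n rs" shows "distinct rs"
proof -
  have "\<forall>i<length rs. \<forall>j<length rs. i \<noteq> j \<longrightarrow> \<not> congruent_rect (rs!i) (rs!j)"
    using assms unfolding mondrian_partition_def by blast
  then have "\<forall>i<length rs. \<forall>j<length rs. i \<noteq> j \<longrightarrow> rs!i \<noteq> rs!j"
    using cong_refl by metis
  then show ?thesis unfolding distinct_conv_nth by blast
qed

lemma area_sum:
  assumes "dissection n rs" "distinct rs"
  shows "(\<Sum>r\<in>set rs. rarea r) = n * n"
proof -
  have disj: "\<forall>r\<in>set rs. \<forall>q\<in>set rs. r \<noteq> q \<longrightarrow> cells r \<inter> cells q = {}"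
  proof (intro ballI impI)
    fix r q assume "r \<in> set rs" "q \<in> set rs" "r \<noteq> q"
    then obtain i j where "i < length rs" "j < length rs" "rs!i = r" "rs!j = q"
      by (metis in_set_conv_nth)
    with \<open>r \<noteq> q\<close> assms(1) show "cells r \<inter> cells q = {}"
      unfolding dissection_def by auto
  qed
  have fin: "\<forall>r\<in>set rs. finite (cells r)" by (auto intro: finite_cartesian_product elim: cells.elims)
  have "card (\<Union>r\<in>set rs. cells r) = (\<Sum>r\<in>set rs. card (cells r))"
    using card_UN_disjoint[OF _ fin disj] by simp
  also have "(\<Union>r\<in>set rs. cells r) = {0..<n} \<times> {0..<n}" using assms(1) unfolding dissection_def by blast
  finally show ?thesis by (simp add: card_cells card_cartesian_product)
qed

lemma side_le:
  assumes "dissection n rs" "r \<in> set rs"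
  shows "rwidth r \<le> n \<and> rheight r \<le> n"
proof -
  obtain x y w h where r: "r = (x,y,w,h)" by (cases r)
  have pos: "w > 0" "h > 0" using assms r unfolding dissection_def by auto
  have "cells r \<subseteq> {0..<n} \<times> {0..<n}" using assms unfolding dissection_def by blast
  moreover have "(x+w-1, y+h-1) \<in> cells r" using pos r by auto
  ultimately have "(x+w-1, y+h-1) \<in> {0..<n} \<times> {0..<n}" by blast
  then have "x+w-1 < n" "y+h-1 < n" by auto
  then have "w \<le> n" "h \<le> n" using pos by linarith+
  then show ?thesis using r by simp
qed

lemma count_bound: "t < 2*s \<Longrightarrow> Suc (t div 2) - (t - s) \<le> 2*s - t"
  by linarith

theorem mainTheorem7:
  fixes p s n :: nat
  assumes "prime p" and "s \<ge> 1" and "n = p ^ s"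
  shows "\<not> (\<exists>rs. perfect_mondrian_partition n rs)"
proof
  assume "\<exists>rs. perfect_mondrian_partition n rs"
  then obtain rs where P: "perfect_mondrian_partition n rs" by blast
  have M: "mondrian_partition n rs" and eqA: "\<forall>r\<in>set rs. \<forall>q\<in>set rs. rarea r = rarea q"
    using P unfolding perfect_mondrian_partition_def by blast+
  have D: "dissection n rs" and len: "length rs \<ge> 2" using M unfolding mondrian_partition_def by blast+
  have dist: "distinct rs" using mp_distinct[OF M] .
  have p1: "p > 1" using assms(1) prime_gt_1_nat by blast
  obtain r0 where r0: "r0 \<in> set rs" using len by (cases rs) auto
  define A where "A = rarea r0"
  define k where "k = length rs"
  have "(\<Sum>r\<in>set rs. rarea r) = (\<Sum>r\<in>set rs. A)"
    using eqA r0 unfolding A_def by (intro sum.cong) blast+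
  also have "\<dots> = k * A" using dist by (simp add: k_def distinct_card)
  finally have sA: "(\<Sum>r\<in>set rs. rarea r) = k * A" .
  have nn: "n * n = p^(2*s)" using assms(3) by (simp add: mult_2 power_add)
  have kA: "k * A = p ^ (2*s)" using sA area_sum[OF D dist] nn by simp
  have "A dvd p^(2*s)" unfolding kA[symmetric] by simp
  then obtain t where t: "t \<le> 2*s" "A = p^t" using divides_primepow_nat[OF assms(1)] by blast
  have kval: "k = p^(2*s - t)"
  proof -
    have "k * p^t = p^(2*s-t) * p^t" using kA t by (simp add: power_add[symmetric])
    then show ?thesis using p1 by simp
  qed
  have tlt: "t < 2*s"
  proof (rule ccontr)
    assume "\<not> t < 2*s" then have "k = 1" using kval t by simp
    then show False using len k_def by simp
  qed
  define f where "f r = min (rwidth r) (rheight r)" for r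
  have fimg: "f ` set rs \<subseteq> (\<lambda>i. p^i) ` {t-s..t div 2}"
  proof
    fix z assume "z \<in> f ` set rs"
    then obtain r where r: "r \<in> set rs" "z = f r" by blast
    obtain x y w h where rr: "r = (x,y,w,h)" by (cases r)
    have "rarea r = A" using eqA r(1) r0 A_def by blast
    then have wh: "w * h = p^t" using rr t by simp
    have le: "w \<le> p^s" "h \<le> p^s" using side_le[OF D r(1)] rr assms(3) by auto
    have "w dvd p^t" unfolding wh[symmetric] by simp
    then obtain i where i: "i \<le> t" "w = p^i" using divides_primepow_nat[OF assms(1)] by blast
    have hv: "h = p^(t-i)"
    proof -
      have "p^i * h = p^i * p^(t-i)" using wh i by (simp add: power_add[symmetric])
      then show ?thesis using p1 by simp
    qed
    have "i \<le> s" by (rule power_le_imp_le_exp[OF p1]) (use le(1) i in simp)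
    moreover have "t - i \<le> s" by (rule power_le_imp_le_exp[OF p1]) (use le(2) hv in simp)
    moreover have "z = p ^ (min i (t-i))"
    proof (cases "i \<le> t - i")
      case True
      then have "w \<le> h" unfolding i(2) hv using p1 by (simp add: power_increasing)
      then have "z = w" using r(2) rr unfolding f_def by simp
      then show ?thesis using True i(2) by simp
    next
      case False
      then have "h \<le> w" unfolding i(2) hv using p1 by (simp add: power_increasing)
      then have "z = h" using r(2) rr unfolding f_def by simp
      then show ?thesis using False hv by simp
    qed
    ultimately show "z \<in> (\<lambda>i. p^i) ` {t-s..t div 2}" using i by (intro image_eqI[of _ _ "min i (t-i)"]) auto
  qed
  have finj: "inj_on f (set rs)"
  proof
    fix r q assume rq: "r \<in> set rs" "q \<in> set rs" "f r = f q"
    show "r = q"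
    proof (rule ccontr)
      assume "r \<noteq> q"
      then obtain i j where ij: "i < length rs" "j < length rs" "rs!i = r" "rs!j = q" "i \<noteq> j"
        using rq by (metis in_set_conv_nth)
      then have nc: "\<not> congruent_rect r q" using M unfolding mondrian_partition_def by blast
      obtain x y w h where rr: "r = (x,y,w,h)" by (cases r)
      obtain x' y' w' h' where qq: "q = (x',y',w',h')" by (cases q)
      have "rarea r = rarea q" using eqA rq(1,2) by blast
      then have a: "w*h = w'*h'" using rr qq by simp
      have allp: "\<forall>r\<in>set rs. rwidth r > 0 \<and> rheight r > 0" using D unfolding dissection_def by blast
      have "rwidth r > 0 \<and> rheight r > 0" "rwidth q > 0 \<and> rheight q > 0" using allp rq(1,2) by blast+
      then have pos: "w > 0" "h > 0" "w' > 0" "h'>0" using rr qq by simp_all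
      have m: "min w h = min w' h'" using rq(3) rr qq f_def by simp
      have "(w = w' \<and> h = h') \<or> (w = h' \<and> h = w')"
      proof (cases "w \<le> h")
        case True
        then have mw: "min w h = w" by simp
        show ?thesis
        proof (cases "w' \<le> h'")
          case True then have "w = w'" using m mw by simp
          then show ?thesis using a pos by simp
        next
          case False then have "w = h'" using m mw by simp
          then have "h = w'" using a pos by (simp add: mult.commute)
          then show ?thesis using \<open>w = h'\<close> by simp
        qed
      next
        case False
        then have mw: "min w h = h" by simp
        show ?thesis
        proof (cases "w' \<le> h'")
          case True then have "h = w'" using m mw by simp
          then have "w = h'" using a pos by (simp add: mult.commute)
          then show ?thesis using \<open>h = w'\<close> by simp
        next
          case False then have "h = h'" using m mw by simp
          then show ?thesis using a pos by simp
        qed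
      qed
      then show False using nc rr qq unfolding congruent_rect_def by auto
    qed
  qed
  have "k = card (f ` set rs)" using finj dist by (simp add: card_image k_def distinct_card)
  also have "\<dots> \<le> card ((\<lambda>i. p^i) ` {t-s..t div 2})" by (rule card_mono[OF _ fimg]) simp
  also have "\<dots> \<le> card {t-s..t div 2}" by (rule card_image_le) simp
  also have "\<dots> \<le> 2*s - t" using count_bound[OF tlt] by simp
  also have "\<dots> < 2^(2*s-t)" by (rule less_exp)
  also have "\<dots> \<le> p^(2*s-t)" using p1 by (simp add: power_mono)
  finally show False using kval by simp
qed

end
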